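(* Let $\varphi$ be a flow on a locally compact metric space $X$, let $N\subset X$ be an isolating neighborhood and let $\gamma:\mathbb R\to X$ be a full solution. The following are equivalent: (i) $\gamma^{-1}(N)$ is right infinite (respectively left infinite); (ii) $\gamma$ wades through $N$ in plus infinity (respectively minus infinity); (iii) $\operatorname{Inv}N\cap\omega(\gamma)\ne\emptyset$ (respectively $\operatorname{Inv}N\cap\alpha(\gamma)\neq\emptyset$).
   Context: A full solution is a map $\gamma:\mathbb R\to X$ with $\gamma(s+t)=\varphi(\gamma(s),t)$. $\alpha(\gamma)=\bigcap_{t<0}\operatorname{cl}\gamma((-\infty,t])$, $\omega(\gamma)=\bigcap_{t>0}\operatorname{cl}\gamma([t,\infty))$. $\operatorname{Inv}N=\{x\in N\mid\varphi(x,\mathbb R)\subset N\}$; an isolating neighborhood is a compact $N$ with $\operatorname{Inv}N\subset\operatorname{int}N$. A set $A\subset\mathbb R$ is right infinite if $\sup\{b-a\mid a,b\ge0,\ [a,b]\subset A\}=\infty$, and left infinite if $\sup\{b-a\mid a,b\le0,\ [a,b]\subset A\}=\infty$. $\gamma$ wades through $N$ in plus infinity if there are real sequences $(t^-_n),(t^+_n)$ with $t^-_n\to+\infty$, $t^+_n-t^-_n\to+\infty$ and $\gamma([t^-_n,t^+_n])\subset N$ for all $n$; it wades through $N$ in minus infinity if there are such sequences with $t^+_n\to-\infty$, $t^+_n-t^-_n\to+\infty$ and $\gamma([t^-_n,t^+_n])\subset N$ for all $n$. *)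

theory Defs
  imports "HOL-Analysis.Analysis" "HOL-Library.Extended_Real"
begin

definition flow :: "('a::metric_space \<Rightarrow> real \<Rightarrow> 'a) \<Rightarrow> bool" where
  "flow \<phi> \<longleftrightarrow> continuous_on UNIV (\<lambda>p. \<phi> (fst p) (snd p)) \<and>
     (\<forall>x. \<phi> x 0 = x) \<and> (\<forall>x s t. \<phi> (\<phi> x s) t = \<phi> x (s + t))"

definition full_solution :: "('a \<Rightarrow> real \<Rightarrow> 'a) \<Rightarrow> (real \<Rightarrow> 'a) \<Rightarrow> bool" where
  "full_solution \<phi> \<gamma> \<longleftrightarrow> (\<forall>s t. \<gamma> (s + t) = \<phi> (\<gamma> s) t)"

definition alpha_limit :: "(real \<Rightarrow> 'a::topological_space) \<Rightarrow> 'a set" where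
  "alpha_limit \<gamma> = (\<Inter>t\<in>{..<0}. closure (\<gamma> ` {..t}))"

definition omega_limit :: "(real \<Rightarrow> 'a::topological_space) \<Rightarrow> 'a set" where
  "omega_limit \<gamma> = (\<Inter>t\<in>{0<..}. closure (\<gamma> ` {t..}))"

definition Inv :: "('a \<Rightarrow> real \<Rightarrow> 'a) \<Rightarrow> 'a set \<Rightarrow> 'a set" where
  "Inv \<phi> N = {x\<in>N. range (\<phi> x) \<subseteq> N}"

definition isolating_neighborhood :: "('a::topological_space \<Rightarrow> real \<Rightarrow> 'a) \<Rightarrow> 'a set \<Rightarrow> bool" where
  "isolating_neighborhood \<phi> N \<longleftrightarrow> compact N \<and> Inv \<phi> N \<subseteq> interior N"

definition right_infinite :: "real set \<Rightarrow> bool" where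
  "right_infinite A \<longleftrightarrow>
     (SUP p\<in>{(a, b). 0 \<le> a \<and> 0 \<le> b \<and> {a..b} \<subseteq> A}. ereal (snd p - fst p)) = \<infinity>"

definition left_infinite :: "real set \<Rightarrow> bool" where
  "left_infinite A \<longleftrightarrow>
     (SUP p\<in>{(a, b). a \<le> 0 \<and> b \<le> 0 \<and> {a..b} \<subseteq> A}. ereal (snd p - fst p)) = \<infinity>"

definition wades_plus :: "(real \<Rightarrow> 'a) \<Rightarrow> 'a set \<Rightarrow> bool" where
  "wades_plus \<gamma> N \<longleftrightarrow> (\<exists>tm tp :: nat \<Rightarrow> real.
     filterlim tm at_top sequentially \<and>
     filterlim (\<lambda>n. tp n - tm n) at_top sequentially \<and>
     (\<forall>n. \<gamma> ` {tm n..tp n} \<subseteq> N))"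

definition wades_minus :: "(real \<Rightarrow> 'a) \<Rightarrow> 'a set \<Rightarrow> bool" where
  "wades_minus \<gamma> N \<longleftrightarrow> (\<exists>tm tp :: nat \<Rightarrow> real.
     filterlim tp at_bot sequentially \<and>
     filterlim (\<lambda>n. tp n - tm n) at_top sequentially \<and>
     (\<forall>n. \<gamma> ` {tm n..tp n} \<subseteq> N))"

end

theory Submission
  imports Defs
begin

lemma right_inf_iff:
  "right_infinite A \<longleftrightarrow> (\<forall>r::real. \<exists>a b. 0 \<le> a \<and> 0 \<le> b \<and> {a..b} \<subseteq> A \<and> r < b - a)"
proof -
  have "right_infinite A \<longleftrightarrow> (\<forall>x<\<infinity>. \<exists>p\<in>{(a, b). 0 \<le> a \<and> 0 \<le> b \<and> {a..b} \<subseteq> A}. x < ereal (snd p - fst p))"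
    unfolding right_infinite_def top_ereal_def[symmetric] by (rule SUP_eq_top_iff)
  also have "\<dots> \<longleftrightarrow> (\<forall>r::real. \<exists>a b. 0 \<le> a \<and> 0 \<le> b \<and> {a..b} \<subseteq> A \<and> r < b - a)"
  proof
    assume H: "\<forall>x<\<infinity>. \<exists>p\<in>{(a, b). 0 \<le> a \<and> 0 \<le> b \<and> {a..b} \<subseteq> A}. x < ereal (snd p - fst p)"
    show "\<forall>r::real. \<exists>a b. 0 \<le> a \<and> 0 \<le> b \<and> {a..b} \<subseteq> A \<and> r < b - a"
    proof
      fix r :: real
      have "ereal r < \<infinity>" by simp
      from H[rule_format, OF this] obtain p where
        "p \<in> {(a, b). 0 \<le> a \<and> 0 \<le> b \<and> {a..b} \<subseteq> A}" "ereal r < ereal (snd p - fst p)" by (rule bexE)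
      then show "\<exists>a b. 0 \<le> a \<and> 0 \<le> b \<and> {a..b} \<subseteq> A \<and> r < b - a"
        by (cases p) auto
    qed
  next
    assume H: "\<forall>r::real. \<exists>a b. 0 \<le> a \<and> 0 \<le> b \<and> {a..b} \<subseteq> A \<and> r < b - a"
    show "\<forall>x<\<infinity>. \<exists>p\<in>{(a, b). 0 \<le> a \<and> 0 \<le> b \<and> {a..b} \<subseteq> A}. x < ereal (snd p - fst p)"
    proof (intro allI impI)
      fix x :: ereal assume "x < \<infinity>"
      then obtain r where "x \<le> ereal r" by (cases x) auto
      obtain a b where ab: "0 \<le> a \<and> 0 \<le> b \<and> {a..b} \<subseteq> A \<and> r < b - a" using spec[OF H, of r] by (elim exE)
      then have rb: "ereal r < ereal (b - a)" by simp
      have lt: "x < ereal (snd (a,b) - fst (a,b))" using le_less_trans[OF \<open>x \<le> ereal r\<close> rb] by simp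
      have mem: "(a,b) \<in> {(a, b). 0 \<le> a \<and> 0 \<le> b \<and> {a..b} \<subseteq> A}" using ab by simp
      show "\<exists>p\<in>{(a, b). 0 \<le> a \<and> 0 \<le> b \<and> {a..b} \<subseteq> A}. x < ereal (snd p - fst p)"
        using mem lt by (rule bexI[rotated])
    qed
  qed
  finally show ?thesis .
qed

lemma left_inf_iff:
  "left_infinite A \<longleftrightarrow> (\<forall>r::real. \<exists>a b. a \<le> 0 \<and> b \<le> 0 \<and> {a..b} \<subseteq> A \<and> r < b - a)"
proof -
  have "left_infinite A \<longleftrightarrow> (\<forall>x<\<infinity>. \<exists>p\<in>{(a, b). a \<le> 0 \<and> b \<le> 0 \<and> {a..b} \<subseteq> A}. x < ereal (snd p - fst p))"
    unfolding left_infinite_def top_ereal_def[symmetric] by (rule SUP_eq_top_iff)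
  also have "\<dots> \<longleftrightarrow> (\<forall>r::real. \<exists>a b. a \<le> 0 \<and> b \<le> 0 \<and> {a..b} \<subseteq> A \<and> r < b - a)"
  proof
    assume H: "\<forall>x<\<infinity>. \<exists>p\<in>{(a, b). a \<le> 0 \<and> b \<le> 0 \<and> {a..b} \<subseteq> A}. x < ereal (snd p - fst p)"
    show "\<forall>r::real. \<exists>a b. a \<le> 0 \<and> b \<le> 0 \<and> {a..b} \<subseteq> A \<and> r < b - a"
    proof
      fix r :: real
      have "ereal r < \<infinity>" by simp
      from H[rule_format, OF this] obtain p where
        "p \<in> {(a, b). a \<le> 0 \<and> b \<le> 0 \<and> {a..b} \<subseteq> A}" "ereal r < ereal (snd p - fst p)" by (rule bexE)
      then show "\<exists>a b. a \<le> 0 \<and> b \<le> 0 \<and> {a..b} \<subseteq> A \<and> r < b - a"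
        by (cases p) auto
    qed
  next
    assume H: "\<forall>r::real. \<exists>a b. a \<le> 0 \<and> b \<le> 0 \<and> {a..b} \<subseteq> A \<and> r < b - a"
    show "\<forall>x<\<infinity>. \<exists>p\<in>{(a, b). a \<le> 0 \<and> b \<le> 0 \<and> {a..b} \<subseteq> A}. x < ereal (snd p - fst p)"
    proof (intro allI impI)
      fix x :: ereal assume "x < \<infinity>"
      then obtain r where "x \<le> ereal r" by (cases x) auto
      obtain a b where ab: "a \<le> 0 \<and> b \<le> 0 \<and> {a..b} \<subseteq> A \<and> r < b - a" using spec[OF H, of r] by (elim exE)
      then have rb: "ereal r < ereal (b - a)" by simp
      have lt: "x < ereal (snd (a,b) - fst (a,b))" using le_less_trans[OF \<open>x \<le> ereal r\<close> rb] by simp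
      have mem: "(a,b) \<in> {(a, b). a \<le> 0 \<and> b \<le> 0 \<and> {a..b} \<subseteq> A}" using ab by simp
      show "\<exists>p\<in>{(a, b). a \<le> 0 \<and> b \<le> 0 \<and> {a..b} \<subseteq> A}. x < ereal (snd p - fst p)"
        using mem lt by (rule bexI[rotated])
    qed
  qed
  finally show ?thesis .
qed

lemma right_left_inf: "right_infinite {t. - t \<in> A} \<longleftrightarrow> left_infinite A"
proof -
  have "(\<exists>a b. 0 \<le> a \<and> 0 \<le> b \<and> {a..b} \<subseteq> {t. - t \<in> A} \<and> r < b - a) \<longleftrightarrow>
        (\<exists>a b. a \<le> 0 \<and> b \<le> 0 \<and> {a..b} \<subseteq> A \<and> r < b - a)" for r :: real
  proof
    assume "\<exists>a b. 0 \<le> a \<and> 0 \<le> b \<and> {a..b} \<subseteq> {t. - t \<in> A} \<and> r < b - a"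
    then obtain a b where h: "0 \<le> a" "0 \<le> b" "{a..b} \<subseteq> {t. - t \<in> A}" "r < b - a" by blast
    have "{-b..-a} \<subseteq> A"
    proof
      fix x assume "x \<in> {-b..-a}"
      then have "-x \<in> {a..b}" by auto
      then show "x \<in> A" using h(3) by auto
    qed
    then show "\<exists>a b. a \<le> 0 \<and> b \<le> 0 \<and> {a..b} \<subseteq> A \<and> r < b - a"
      using h by (intro exI[of _ "-b"] exI[of _ "-a"]) auto
  next
    assume "\<exists>a b. a \<le> 0 \<and> b \<le> 0 \<and> {a..b} \<subseteq> A \<and> r < b - a"
    then obtain a b where h: "a \<le> 0" "b \<le> 0" "{a..b} \<subseteq> A" "r < b - a" by blast
    have "{-b..-a} \<subseteq> {t. - t \<in> A}"
    proof
      fix x assume "x \<in> {-b..-a}"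
      then have "-x \<in> {a..b}" by auto
      then show "x \<in> {t. - t \<in> A}" using h(3) by auto
    qed
    then show "\<exists>a b. 0 \<le> a \<and> 0 \<le> b \<and> {a..b} \<subseteq> {t. - t \<in> A} \<and> r < b - a"
      using h by (intro exI[of _ "-b"] exI[of _ "-a"]) auto
  qed
  then show ?thesis unfolding right_inf_iff left_inf_iff by simp
qed

lemma right_inf_wades:
  "right_infinite (\<gamma> -` N) \<longleftrightarrow> wades_plus \<gamma> N"
proof
  assume "right_infinite (\<gamma> -` N)"
  then have "\<forall>n::nat. \<exists>a b. 0 \<le> a \<and> 0 \<le> b \<and> {a..b} \<subseteq> \<gamma> -` N \<and> 2 * real n < b - a"
    unfolding right_inf_iff by blast
  then obtain a b where ab: "\<And>n. 0 \<le> a n \<and> 0 \<le> b n \<and> {a n..b n} \<subseteq> \<gamma> -` N \<and> 2 * real n < b n - a n"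
    by metis
  define tm where "tm n = (a n + b n) / 2" for n
  have le1: "real n \<le> tm n" for n using ab[of n] by (simp add: tm_def)
  have le2: "real n \<le> b n - tm n" for n using ab[of n] by (simp add: tm_def field_simps)
  have 1: "filterlim tm at_top sequentially"
    by (rule filterlim_at_top_mono[OF filterlim_real_sequentially]) (use le1 in simp)
  have 2: "filterlim (\<lambda>n. b n - tm n) at_top sequentially"
    by (rule filterlim_at_top_mono[OF filterlim_real_sequentially]) (use le2 in simp)
  have 3: "\<gamma> ` {tm n..b n} \<subseteq> N" for n
  proof -
    have "{tm n..b n} \<subseteq> {a n..b n}" using ab[of n] by (auto simp: tm_def)
    then have "{tm n..b n} \<subseteq> \<gamma> -` N" using ab[of n] by (meson order_trans)
    then show ?thesis by blast
  qed
  show "wades_plus \<gamma> N" unfolding wades_plus_def using 1 2 3 by blast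
next
  assume "wades_plus \<gamma> N"
  then obtain tm tp :: "nat \<Rightarrow> real" where h: "filterlim tm at_top sequentially"
    "filterlim (\<lambda>n. tp n - tm n) at_top sequentially" "\<And>n. \<gamma> ` {tm n..tp n} \<subseteq> N"
    unfolding wades_plus_def by blast
  show "right_infinite (\<gamma> -` N)" unfolding right_inf_iff
  proof
    fix r :: real
    have e1: "eventually (\<lambda>n. 0 \<le> tm n) sequentially"
      using h(1) filterlim_at_top by metis
    have e2: "eventually (\<lambda>n. max r 0 + 1 \<le> tp n - tm n) sequentially"
      using h(2) filterlim_at_top by metis
    obtain M where M: "\<And>n. n \<ge> M \<Longrightarrow> 0 \<le> tm n \<and> max r 0 + 1 \<le> tp n - tm n"
      using eventually_conj[OF e1 e2] unfolding eventually_sequentially by blast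
    have n: "tm M \<ge> 0" "tp M - tm M \<ge> max r 0 + 1" using M[of M] by auto
    show "\<exists>a b. 0 \<le> a \<and> 0 \<le> b \<and> {a..b} \<subseteq> \<gamma> -` N \<and> r < b - a"
    proof (rule exI[of _ "tm M"], rule exI[of _ "tp M"], intro conjI)
      show "{tm M..tp M} \<subseteq> \<gamma> -` N" using h(3)[of M] by (simp add: image_subset_iff_subset_vimage)
    qed (use n in auto)
  qed
qed

lemma flow_rev: assumes "flow \<phi>" shows "flow (\<lambda>x t. \<phi> x (- t))"
proof -
  have c: "continuous_on UNIV (\<lambda>p. \<phi> (fst p) (snd p))" and e: "\<forall>x. \<phi> x 0 = x"
    and g: "\<forall>x s t. \<phi> (\<phi> x s) t = \<phi> x (s + t)" using assms by (auto simp: flow_def)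
  have "continuous_on UNIV (\<lambda>p. (\<lambda>p. \<phi> (fst p) (snd p)) ((\<lambda>p. (fst p, - snd p)) p))"
    by (rule continuous_on_compose2[OF c]) (auto intro!: continuous_intros)
  then have "continuous_on UNIV (\<lambda>p. \<phi> (fst p) (- snd p))" by simp
  moreover have "\<forall>x s t. \<phi> (\<phi> x (- s)) (- t) = \<phi> x (- (s + t))" using g by simp
  ultimately show ?thesis using e unfolding flow_def by simp
qed

lemma full_rev: assumes "full_solution \<phi> \<gamma>" shows "full_solution (\<lambda>x t. \<phi> x (- t)) (\<lambda>t. \<gamma> (- t))"
  unfolding full_solution_def
proof (intro allI)
  fix s t :: real
  have "\<gamma> (- s + - t) = \<phi> (\<gamma> (- s)) (- t)" using assms unfolding full_solution_def by blast
  then show "\<gamma> (- (s + t)) = \<phi> (\<gamma> (- s)) (- (t))" by simp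
qed

lemma range_rev: "range (\<lambda>t. f (- t::real)) = range f"
proof
  show "range (\<lambda>t. f (- t::real)) \<subseteq> range f" by auto
  show "range f \<subseteq> range (\<lambda>t. f (- t::real))"
  proof
    fix z assume "z \<in> range f"
    then obtain y where "z = f y" by auto
    then show "z \<in> range (\<lambda>t. f (- t::real))" using rangeI[where f="\<lambda>t. f (- t)" and x="-y"] by simp
  qed
qed

lemma Inv_rev: "Inv (\<lambda>x t. \<phi> x (- t)) N = Inv \<phi> N"
  unfolding Inv_def using range_rev[of "\<phi> _"] by simp

lemma isol_rev: "isolating_neighborhood (\<lambda>x t. \<phi> x (- t)) N = isolating_neighborhood \<phi> N"
  unfolding isolating_neighborhood_def Inv_rev ..

lemma img_rev_atLeast: "(\<lambda>t::real. \<gamma> (- t)) ` {a..} = \<gamma> ` {..- a}"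
proof -
  have "\<gamma> ` (uminus ` {a..}) = (\<lambda>t::real. \<gamma> (- t)) ` {a..}" by (rule image_image)
  then show ?thesis by (simp only: image_uminus_atLeast)
qed

lemma img_rev_atLeastAtMost: "(\<lambda>t::real. \<gamma> (- t)) ` {a..b} = \<gamma> ` {- b..- a}"
proof -
  have "\<gamma> ` (uminus ` {a..b}) = (\<lambda>t::real. \<gamma> (- t)) ` {a..b}" by (rule image_image)
  then show ?thesis by (simp only: image_uminus_atLeastAtMost)
qed

lemma omega_rev: "omega_limit (\<lambda>t. \<gamma> (- t)) = alpha_limit \<gamma>"
proof
  show "omega_limit (\<lambda>t. \<gamma> (- t)) \<subseteq> alpha_limit \<gamma>"
  proof
    fix x assume x: "x \<in> omega_limit (\<lambda>t. \<gamma> (- t))"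
    show "x \<in> alpha_limit \<gamma>" unfolding alpha_limit_def
    proof
      fix t :: real assume "t \<in> {..<0}"
      then have "- t \<in> {0<..}" by simp
      with x have "x \<in> closure ((\<lambda>t. \<gamma> (- t)) ` {- t..})" unfolding omega_limit_def by blast
      then show "x \<in> closure (\<gamma> ` {..t})" by (simp add: img_rev_atLeast)
    qed
  qed
next
  show "alpha_limit \<gamma> \<subseteq> omega_limit (\<lambda>t. \<gamma> (- t))"
  proof
    fix x assume x: "x \<in> alpha_limit \<gamma>"
    show "x \<in> omega_limit (\<lambda>t. \<gamma> (- t))" unfolding omega_limit_def
    proof
      fix t :: real assume "t \<in> {0<..}"
      then have "- t \<in> {..<0}" by simp
      with x have "x \<in> closure (\<gamma> ` {..- t})" unfolding alpha_limit_def by blast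
      then show "x \<in> closure ((\<lambda>t. \<gamma> (- t)) ` {t..})" by (simp add: img_rev_atLeast)
    qed
  qed
qed

lemma wades_rev: "wades_plus (\<lambda>t. \<gamma> (- t)) N \<longleftrightarrow> wades_minus \<gamma> N"
proof
  assume "wades_plus (\<lambda>t. \<gamma> (- t)) N"
  then obtain tm tp :: "nat \<Rightarrow> real" where h: "filterlim tm at_top sequentially"
    "filterlim (\<lambda>n. tp n - tm n) at_top sequentially" "\<And>n. (\<lambda>t. \<gamma> (- t)) ` {tm n..tp n} \<subseteq> N"
    unfolding wades_plus_def by blast
  have 1: "filterlim (\<lambda>n. - tm n) at_bot sequentially" using h(1) filterlim_uminus_at_top by blast
  have 2: "filterlim (\<lambda>n. - tm n - - tp n) at_top sequentially" using h(2) by simp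
  have 3: "\<gamma> ` {- tp n..- tm n} \<subseteq> N" for n using h(3)[of n] by (simp add: img_rev_atLeastAtMost)
  show "wades_minus \<gamma> N" unfolding wades_minus_def
    by (rule exI[of _ "\<lambda>n. - tp n"], rule exI[of _ "\<lambda>n. - tm n"]) (use 1 2 3 in simp)
next
  assume "wades_minus \<gamma> N"
  then obtain tm tp :: "nat \<Rightarrow> real" where h: "filterlim tp at_bot sequentially"
    "filterlim (\<lambda>n. tp n - tm n) at_top sequentially" "\<And>n. \<gamma> ` {tm n..tp n} \<subseteq> N"
    unfolding wades_minus_def by blast
  have 1: "filterlim (\<lambda>n. - tp n) at_top sequentially" using h(1) filterlim_uminus_at_bot by blast
  have 2: "filterlim (\<lambda>n. - tm n - - tp n) at_top sequentially" using h(2) by simp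
  have 3: "(\<lambda>t. \<gamma> (- t)) ` {- tp n..- tm n} \<subseteq> N" for n using h(3)[of n] by (simp add: img_rev_atLeastAtMost)
  show "wades_plus (\<lambda>t. \<gamma> (- t)) N" unfolding wades_plus_def
    by (rule exI[of _ "\<lambda>n. - tp n"], rule exI[of _ "\<lambda>n. - tm n"]) (use 1 2 3 in simp)
qed

lemma left_right_pre: "left_infinite (\<gamma> -` N) \<longleftrightarrow> right_infinite ((\<lambda>t. \<gamma> (- t)) -` N)"
proof -
  have eq: "(\<lambda>t. \<gamma> (- t)) -` N = {t. - t \<in> \<gamma> -` N}" by auto
  show ?thesis using right_left_inf[of "\<gamma> -` N"] by (simp only: eq)
qed

lemma wades_to_inv:
  fixes \<phi> :: "'a::metric_space \<Rightarrow> real \<Rightarrow> 'a"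
  assumes fl: "flow \<phi>" and cN: "compact N" and fs: "full_solution \<phi> \<gamma>" and w: "wades_plus \<gamma> N"
  shows "Inv \<phi> N \<inter> omega_limit \<gamma> \<noteq> {}"
proof -
  obtain tm tp :: "nat \<Rightarrow> real" where h: "filterlim tm at_top sequentially"
    "filterlim (\<lambda>n. tp n - tm n) at_top sequentially" "\<And>n. \<gamma> ` {tm n..tp n} \<subseteq> N"
    using w unfolding wades_plus_def by blast
  have cont: "continuous_on UNIV (\<lambda>p. \<phi> (fst p) (snd p))" using fl by (simp add: flow_def)
  have fsol: "\<gamma> (s + t) = \<phi> (\<gamma> s) t" for s t using fs by (simp add: full_solution_def)
  have clN: "closed N" using cN by (rule compact_imp_closed)
  define m where "m n = (tm n + tp n) / 2" for n
  define L where "L n = tp n - tm n" for n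
  have mN: "0 \<le> L n \<Longrightarrow> \<gamma> (m n) \<in> N" for n
  proof -
    assume "0 \<le> L n"
    then have "m n \<in> {tm n..tp n}" by (simp add: m_def L_def)
    then show ?thesis using h(3)[of n] by (meson image_subset_iff)
  qed
  have "eventually (\<lambda>n. 0 \<le> L n) sequentially"
    using h(2) unfolding L_def filterlim_at_top by metis
  then obtain M where M: "0 \<le> L M" unfolding eventually_sequentially by (meson order.refl)
  define f where "f n = (if 0 \<le> L n then \<gamma> (m n) else \<gamma> (m M))" for n
  have fN: "f n \<in> N" for n using mN M by (simp add: f_def)
  have fN': "\<forall>n. f n \<in> N" using fN by simp
  obtain x r where xN: "x \<in> N" and r: "strict_mono r" and lim: "(f \<circ> r) \<longlonglongrightarrow> x"
    by (rule seq_compactE[OF compact_imp_seq_compact[OF cN] fN'])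
  have rs: "filterlim r sequentially sequentially" using r by (rule filterlim_subseq)
  have Lr: "filterlim (\<lambda>n. L (r n)) at_top sequentially"
    using filterlim_compose[OF h(2) rs] unfolding L_def by (simp add: comp_def)
  have tmr: "filterlim (\<lambda>n. tm (r n)) at_top sequentially"
    using filterlim_compose[OF h(1) rs] by (simp add: comp_def)
  have evL: "eventually (\<lambda>n. c \<le> L (r n)) sequentially" for c
    using Lr unfolding filterlim_at_top by metis
  have evtm: "eventually (\<lambda>n. c \<le> tm (r n)) sequentially" for c
    using tmr unfolding filterlim_at_top by metis
  have lim2: "(\<lambda>n. \<gamma> (m (r n))) \<longlonglongrightarrow> x"
  proof -
    have "eventually (\<lambda>n. (f \<circ> r) n = \<gamma> (m (r n))) sequentially"
      using evL[of 0] by eventually_elim (simp add: f_def)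
    from tendsto_cong[OF this] lim show ?thesis by (rule iffD1)
  qed
  have inv: "x \<in> Inv \<phi> N"
    unfolding Inv_def
  proof (intro CollectI conjI xN subsetI)
    fix z assume "z \<in> range (\<phi> x)"
    then obtain t where z: "z = \<phi> x t" by auto
    have "((\<lambda>n. (\<gamma> (m (r n)), t)) \<longlonglongrightarrow> (x, t))"
      by (intro tendsto_Pair lim2 tendsto_const)
    from continuous_on_tendsto_compose[OF cont this]
    have "((\<lambda>n. \<phi> (\<gamma> (m (r n))) t) \<longlonglongrightarrow> \<phi> x t)" by (simp add: comp_def)
    moreover have "eventually (\<lambda>n. \<phi> (\<gamma> (m (r n))) t \<in> N) sequentially"
      using evL[of "2 * \<bar>t\<bar>"]
    proof eventually_elim
      case (elim n)
      have a1: "t \<le> \<bar>t\<bar>" "- t \<le> \<bar>t\<bar>" by auto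
      have "tm (r n) \<le> m (r n) + t" using elim a1 unfolding m_def L_def by (simp add: field_simps)
      moreover have "m (r n) + t \<le> tp (r n)" using elim a1 unfolding m_def L_def by (simp add: field_simps)
      ultimately have "m (r n) + t \<in> {tm (r n)..tp (r n)}" by simp
      then have "\<gamma> (m (r n) + t) \<in> N" using h(3)[of "r n"] by (meson image_subset_iff)
      then show ?case by (simp add: fsol)
    qed
    ultimately have "\<phi> x t \<in> N" using clN by (metis Lim_in_closed_set trivial_limit_sequentially)
    then show "z \<in> N" using z by simp
  qed
  have om: "x \<in> omega_limit \<gamma>"
    unfolding omega_limit_def
  proof
    fix t :: real assume "t \<in> {0<..}"
    have "eventually (\<lambda>n. \<gamma> (m (r n)) \<in> closure (\<gamma> ` {t..})) sequentially"
      using eventually_conj[OF evL[of 0] evtm[of t]]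
    proof eventually_elim
      case (elim n)
      then have "m (r n) \<in> {t..}" by (auto simp: m_def L_def)
      then have "\<gamma> (m (r n)) \<in> \<gamma> ` {t..}" by (rule imageI)
      then show ?case by (rule subsetD[OF closure_subset])
    qed
    then show "x \<in> closure (\<gamma> ` {t..})"
      using lim2 by (metis Lim_in_closed_set closed_closure trivial_limit_sequentially)
  qed
  have "x \<in> Inv \<phi> N \<inter> omega_limit \<gamma>" using inv om by (rule IntI)
  then show ?thesis by auto
qed

lemma inv_to_wades:
  fixes \<phi> :: "'a::metric_space \<Rightarrow> real \<Rightarrow> 'a"
  assumes fl: "flow \<phi>" and iso: "Inv \<phi> N \<subseteq> interior N" and fs: "full_solution \<phi> \<gamma>"
    and xI: "x \<in> Inv \<phi> N" and xo: "x \<in> omega_limit \<gamma>"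
  shows "wades_plus \<gamma> N"
proof -
  have cont: "continuous_on UNIV (\<lambda>p. \<phi> (fst p) (snd p))" using fl by (simp add: flow_def)
  have grp: "\<phi> (\<phi> y s) t = \<phi> y (s + t)" for y s t using fl by (simp add: flow_def)
  have fsol: "\<gamma> (s + t) = \<phi> (\<gamma> s) t" for s t using fs by (simp add: full_solution_def)
  have orb: "\<phi> x u \<in> interior N" for u
  proof -
    have "\<phi> x u \<in> N" using xI by (auto simp: Inv_def)
    moreover have "range (\<phi> (\<phi> x u)) \<subseteq> N"
    proof
      fix z assume "z \<in> range (\<phi> (\<phi> x u))"
      then obtain v where "z = \<phi> (\<phi> x u) v" by auto
      then have "z = \<phi> x (u + v)" by (simp add: grp)
      then show "z \<in> N" using xI by (auto simp: Inv_def)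
    qed
    ultimately have "\<phi> x u \<in> Inv \<phi> N" by (simp add: Inv_def)
    then show ?thesis using iso by blast
  qed
  have tube: "\<exists>d>0. \<forall>y. dist y x < d \<longrightarrow> (\<forall>u\<in>{-T..T}. \<phi> y u \<in> N)" for T :: real
  proof -
    define W where "W = (\<lambda>p. \<phi> (fst p) (snd p)) -` interior N"
    have oW: "open W" unfolding W_def by (rule open_vimage[OF open_interior cont])
    have sub: "{x} \<times> {-T..T} \<subseteq> W" using orb by (auto simp: W_def)
    obtain X0 where X0: "x \<in> X0" "open X0" "X0 \<times> {-T..T} \<subseteq> W"
      using Elementary_Topology.tube_lemma[OF compact_Icc oW sub] by blast
    obtain d where d: "d > 0" "ball x d \<subseteq> X0" using X0(1,2) open_contains_ball by blast
    have "\<forall>y. dist y x < d \<longrightarrow> (\<forall>u\<in>{-T..T}. \<phi> y u \<in> N)"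
    proof (intro allI impI ballI)
      fix y u assume "dist y x < d" "u \<in> {-T..T}"
      then have "y \<in> ball x d" by (simp add: dist_commute)
      then have "y \<in> X0" using d(2) by blast
      then have "(y, u) \<in> X0 \<times> {-T..T}" using \<open>u \<in> {-T..T}\<close> by simp
      then have "(y, u) \<in> W" using X0(3) by blast
      then have "\<phi> y u \<in> interior N" by (simp add: W_def)
      then show "\<phi> y u \<in> N" using interior_subset by blast
    qed
    then show ?thesis using d(1) by blast
  qed
  have "\<exists>s. 2 * real n + 1 \<le> s \<and> \<gamma> ` {s - real n..s + real n} \<subseteq> N" for n :: nat
  proof -
    obtain d where d: "d > 0" "\<And>y u. dist y x < d \<Longrightarrow> u \<in> {- real n..real n} \<Longrightarrow> \<phi> y u \<in> N"
      using tube[of "real n"] by blast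
    have "2 * real n + 1 \<in> {0<..}" by simp
    then have "x \<in> closure (\<gamma> ` {2 * real n + 1..})" using xo unfolding omega_limit_def by blast
    then obtain y where y: "y \<in> \<gamma> ` {2 * real n + 1..}" "dist y x < d"
      using d(1) unfolding closure_approachable by blast
    then obtain s where s: "2 * real n + 1 \<le> s" "y = \<gamma> s" by auto
    have "\<gamma> ` {s - real n..s + real n} \<subseteq> N"
    proof
      fix z assume "z \<in> \<gamma> ` {s - real n..s + real n}"
      then obtain v where v: "v \<in> {s - real n..s + real n}" "z = \<gamma> v" by auto
      have "z = \<phi> (\<gamma> s) (v - s)" using v(2) fsol[of s "v - s"] by simp
      moreover have "v - s \<in> {- real n..real n}" using v(1) by auto
      ultimately show "z \<in> N" using d(2) y(2) s(2) by simp
    qed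
    then show ?thesis using s(1) by blast
  qed
  then obtain S where S: "\<And>n. 2 * real n + 1 \<le> S n" "\<And>n. \<gamma> ` {S n - real n..S n + real n} \<subseteq> N"
    by metis
  have le: "real n \<le> S n - real n" for n using S(1)[of n] by linarith
  have 1: "filterlim (\<lambda>n. S n - real n) at_top sequentially"
    by (rule filterlim_at_top_mono[OF filterlim_real_sequentially]) (simp add: le always_eventually)
  have 2: "filterlim (\<lambda>n. (S n + real n) - (S n - real n)) at_top sequentially"
    by (rule filterlim_at_top_mono[OF filterlim_real_sequentially]) simp
  show ?thesis unfolding wades_plus_def
    by (rule exI[of _ "\<lambda>n. S n - real n"], rule exI[of _ "\<lambda>n. S n + real n"]) (use 1 2 S(2) in simp)
qed

theorem proposition5p21:
  fixes \<phi> :: "'a::metric_space \<Rightarrow> real \<Rightarrow> 'a" and N :: "'a set" and \<gamma> :: "real \<Rightarrow> 'a"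
  assumes "locally compact (UNIV :: 'a set)"
    and "flow \<phi>"
    and "isolating_neighborhood \<phi> N"
    and "full_solution \<phi> \<gamma>"
  shows "(right_infinite (\<gamma> -` N) \<longleftrightarrow> wades_plus \<gamma> N) \<and>
         (wades_plus \<gamma> N \<longleftrightarrow> Inv \<phi> N \<inter> omega_limit \<gamma> \<noteq> {}) \<and>
         (left_infinite (\<gamma> -` N) \<longleftrightarrow> wades_minus \<gamma> N) \<and>
         (wades_minus \<gamma> N \<longleftrightarrow> Inv \<phi> N \<inter> alpha_limit \<gamma> \<noteq> {})"
proof -
  have iso: "compact N" "Inv \<phi> N \<subseteq> interior N" using assms(3) by (auto simp: isolating_neighborhood_def)
  have plus: "wades_plus g N \<longleftrightarrow> Inv p N \<inter> omega_limit g \<noteq> {}"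
    if fl: "flow p" and fs: "full_solution p g" and c: "compact N" and ii: "Inv p N \<subseteq> interior N"
    for p :: "'a \<Rightarrow> real \<Rightarrow> 'a" and g
  proof
    assume "wades_plus g N" then show "Inv p N \<inter> omega_limit g \<noteq> {}"
      by (rule wades_to_inv[OF fl c fs])
  next
    assume "Inv p N \<inter> omega_limit g \<noteq> {}"
    then obtain x where "x \<in> Inv p N" "x \<in> omega_limit g" by blast
    then show "wades_plus g N" by (rule inv_to_wades[OF fl ii fs])
  qed
  have fl': "flow (\<lambda>x t. \<phi> x (- t))" using assms(2) by (rule flow_rev)
  have fs': "full_solution (\<lambda>x t. \<phi> x (- t)) (\<lambda>t. \<gamma> (- t))" using assms(4) by (rule full_rev)
  have ii': "Inv (\<lambda>x t. \<phi> x (- t)) N \<subseteq> interior N" using iso(2) by (simp only: Inv_rev)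
  have A: "right_infinite (\<gamma> -` N) \<longleftrightarrow> wades_plus \<gamma> N" by (rule right_inf_wades)
  have B: "wades_plus \<gamma> N \<longleftrightarrow> Inv \<phi> N \<inter> omega_limit \<gamma> \<noteq> {}"
    by (rule plus[OF assms(2) assms(4) iso])
  have C: "left_infinite (\<gamma> -` N) \<longleftrightarrow> wades_minus \<gamma> N"
    using right_inf_wades[of "\<lambda>t. \<gamma> (- t)" N] by (simp only: left_right_pre wades_rev)
  have D: "wades_minus \<gamma> N \<longleftrightarrow> Inv \<phi> N \<inter> alpha_limit \<gamma> \<noteq> {}"
    using plus[OF fl' fs' iso(1) ii'] by (simp only: wades_rev Inv_rev omega_rev)
  show ?thesis using A B C D by (simp only:)
qed

end
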